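(* Let $W$ be a finite connected CW-complex, $Q$ the Hilbert cube, and let $\tilde\varphi: S^d\times W\times Q\to S^d\times W\times Q$, $\tilde\varphi(s,w)=(\varphi(s),h_s(w))$, be a minimal homeomorphism, where $h:S^d\to\mathrm{Homeo}(W\times Q)$ is continuous. Then the homeomorphism $\tilde\zeta: Z\times W\times Q\to Z\times W\times Q$, $\tilde\zeta(z,w)=(\zeta(z),h_{q(z)}(w))$, is minimal.
   Context: Fix an odd integer $d\ge3$ and a minimal diffeomorphism $\varphi:S^d\to S^d$. $(Z,\zeta)$ is the point-like minimal system of Deeley–Putnam–Strung associated to $\varphi$: there is a $\varphi$-invariant subset $L_\infty\subset S^d$ (the image of an injective immersion of $\mathbb{R}$); $Z$ is a compact metric space obtained by completing $S^d\setminus L_\infty$ with respect to a suitable metric, so that $S^d\setminus L_\infty$ is a dense subset of $Z$; $\zeta$ is the minimal homeomorphism of $Z$ extending $\varphi|_{S^d\setminus L_\infty}$; $Z$ has the Čech cohomology and $K$-theory of a point; and $q:Z\to S^d$ is an almost one-to-one factor map ($q\circ\zeta=\varphi\circ q$) which is the identity, in particular injective, on $S^d\setminus L_\infty$. A homeomorphism is minimal if it has no proper nonempty closed invariant subsets. *)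

theory Defs
  imports "HOL-Analysis.Analysis"
begin

definition minimal_homeo :: "'a topology \<Rightarrow> ('a \<Rightarrow> 'a) \<Rightarrow> bool" where
  "minimal_homeo X f \<longleftrightarrow> homeomorphic_map X X f \<and>
     (\<forall>A. closedin X A \<and> A \<noteq> {} \<and> f ` A = A \<longrightarrow> A = topspace X)"

definition disc :: "nat \<Rightarrow> (nat \<Rightarrow> real) set" where
  "disc n = {x. (\<forall>i\<ge>n. x i = 0) \<and> (\<Sum>i<n. (x i)^2) \<le> 1}"

definition open_disc :: "nat \<Rightarrow> (nat \<Rightarrow> real) set" where
  "open_disc n = {x. (\<forall>i\<ge>n. x i = 0) \<and> (\<Sum>i<n. (x i)^2) < 1}"

definition disc_top :: "nat \<Rightarrow> (nat \<Rightarrow> real) topology" where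
  "disc_top n = subtopology (Euclidean_space n) (disc n)"

text \<open>Finite CW complex: a Hausdorff space with finitely many cells, each given by a
  characteristic map from a closed disc which is a homeomorphism of the open disc onto
  the cell, the cells partition the space, and the boundary of each cell is mapped into
  the union of cells of lower dimension.  (For finitely many cells closure finiteness and
  the weak topology condition are automatic.)\<close>
definition finite_CW_complex :: "'a topology \<Rightarrow> bool" where
  "finite_CW_complex X \<longleftrightarrow> Hausdorff_space X \<and>
    (\<exists>(I::nat set) (dim::nat \<Rightarrow> nat) (\<Phi>::nat \<Rightarrow> (nat \<Rightarrow> real) \<Rightarrow> 'a).
       finite I \<and>
       (\<forall>i\<in>I. continuous_map (disc_top (dim i)) X (\<Phi> i) \<and>
               homeomorphic_map (subtopology (Euclidean_space (dim i)) (open_disc (dim i)))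
                                (subtopology X (\<Phi> i ` open_disc (dim i))) (\<Phi> i)) \<and>
       (\<forall>i\<in>I. \<forall>j\<in>I. i \<noteq> j \<longrightarrow> \<Phi> i ` open_disc (dim i) \<inter> \<Phi> j ` open_disc (dim j) = {}) \<and>
       (\<Union>i\<in>I. \<Phi> i ` open_disc (dim i)) = topspace X \<and>
       (\<forall>i\<in>I. \<Phi> i ` (disc (dim i) - open_disc (dim i)) \<subseteq>
                 (\<Union>j\<in>{j\<in>I. dim j < dim i}. \<Phi> j ` open_disc (dim j))))"

definition hilbert_cube :: "(nat \<Rightarrow> real) topology" where
  "hilbert_cube = product_topology (\<lambda>_. top_of_set {0..1}) UNIV"

end

theory Submission
  imports Defs
begin

lemma cm_first:
  "continuous_map A A' f \<Longrightarrow> continuous_map (prod_topology A B) (prod_topology A' B) (\<lambda>(a,b). (f a, b))"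
  using continuous_map_prod_top[of A B A' B f id] by (simp add: id_def)

theorem proposition2p8:
  fixes d :: nat
    and \<phi> :: "(nat \<Rightarrow> real) \<Rightarrow> (nat \<Rightarrow> real)"
    and L :: "(nat \<Rightarrow> real) set"
    and \<gamma> :: "real \<Rightarrow> (nat \<Rightarrow> real)"
    and Z :: "'z topology"
    and \<zeta> :: "'z \<Rightarrow> 'z"
    and \<iota> :: "(nat \<Rightarrow> real) \<Rightarrow> 'z"
    and q :: "'z \<Rightarrow> (nat \<Rightarrow> real)"
    and W :: "'w topology"
    and h :: "(nat \<Rightarrow> real) \<Rightarrow> ('w \<times> (nat \<Rightarrow> real)) \<Rightarrow> ('w \<times> (nat \<Rightarrow> real))"
  assumes d_odd: "odd d" and d_ge: "d \<ge> 3"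
    \<comment> \<open>the minimal homeomorphism (diffeomorphism) of S^d\<close>
    and phi_min: "minimal_homeo (nsphere d) \<phi>"
    \<comment> \<open>L_\<infinity>: phi-invariant image of an injective continuous map R -> S^d\<close>
    and gamma_cont: "continuous_map euclideanreal (nsphere d) \<gamma>"
    and gamma_inj: "inj \<gamma>"
    and L_def: "L = range \<gamma>"
    and L_inv: "\<phi> ` L = L"
    \<comment> \<open>Z: compact metric space containing S^d - L as a dense subset (via the inclusion iota)\<close>
    and Z_compact: "compact_space Z"
    and Z_metr: "metrizable_space Z"
    and iota_inj: "inj_on \<iota> (topspace (nsphere d) - L)"
    and iota_into: "\<iota> ` (topspace (nsphere d) - L) \<subseteq> topspace Z"
    and iota_dense: "Z closure_of (\<iota> ` (topspace (nsphere d) - L)) = topspace Z"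
    \<comment> \<open>zeta: minimal homeomorphism of Z extending phi restricted to S^d - L\<close>
    and zeta_min: "minimal_homeo Z \<zeta>"
    and zeta_ext: "\<And>x. x \<in> topspace (nsphere d) - L \<Longrightarrow> \<zeta> (\<iota> x) = \<iota> (\<phi> x)"
    \<comment> \<open>q: almost one-to-one factor map Z -> S^d, the identity on S^d - L\<close>
    and q_cont: "continuous_map Z (nsphere d) q"
    and q_surj: "q ` topspace Z = topspace (nsphere d)"
    and q_factor: "\<And>z. z \<in> topspace Z \<Longrightarrow> q (\<zeta> z) = \<phi> (q z)"
    and q_id: "\<And>x. x \<in> topspace (nsphere d) - L \<Longrightarrow> q (\<iota> x) = x"
    and q_fibre: "\<And>z. z \<in> topspace Z \<Longrightarrow> q z \<notin> L \<Longrightarrow> z \<in> \<iota> ` (topspace (nsphere d) - L)"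
    \<comment> \<open>W: finite connected CW complex\<close>
    and W_CW: "finite_CW_complex W"
    and W_conn: "connected_space W"
    \<comment> \<open>h : S^d -> Homeo(W x Q) continuous\<close>
    and h_homeo: "\<And>s. s \<in> topspace (nsphere d) \<Longrightarrow>
                    homeomorphic_map (prod_topology W hilbert_cube) (prod_topology W hilbert_cube) (h s)"
    and h_cont: "continuous_map (prod_topology (nsphere d) (prod_topology W hilbert_cube))
                   (prod_topology W hilbert_cube) (\<lambda>(s, x). h s x)"
    \<comment> \<open>the skew product over phi is minimal\<close>
    and skew_min: "minimal_homeo (prod_topology (nsphere d) (prod_topology W hilbert_cube))
                     (\<lambda>(s, x). (\<phi> s, h s x))"
  shows "minimal_homeo (prod_topology Z (prod_topology W hilbert_cube))
           (\<lambda>(z, x). (\<zeta> z, h (q z) x))"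
proof -
  define X where "X = prod_topology W hilbert_cube"
  define S where "S = topspace (nsphere d)"
  define F where "F = (\<lambda>(z, x). (\<zeta> z, h (q z) x))"
  define G where "G = (\<lambda>(s::nat\<Rightarrow>real, x). (\<phi> s, h s x))"
  have hS: "Hausdorff_space (nsphere d)"
    unfolding nsphere_def by (rule Hausdorff_space_subtopology[OF Hausdorff_Euclidean_space])
  have qS: "\<And>z. z \<in> topspace Z \<Longrightarrow> q z \<in> S"
    using q_cont unfolding S_def by (metis continuous_map_image_subset_topspace image_subset_iff)
  have zh: "homeomorphic_map Z Z \<zeta>" using zeta_min by (simp add: minimal_homeo_def)
  then obtain \<zeta>' where zm: "homeomorphic_maps Z Z \<zeta> \<zeta>'" using homeomorphic_map_maps by blast
  have Gh: "homeomorphic_map (prod_topology (nsphere d) X) (prod_topology (nsphere d) X) G"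
    using skew_min by (simp add: minimal_homeo_def G_def X_def)
  then obtain G' where Gm: "homeomorphic_maps (prod_topology (nsphere d) X) (prod_topology (nsphere d) X) G G'"
    using homeomorphic_map_maps by blast
  have ph: "homeomorphic_map (nsphere d) (nsphere d) \<phi>" using phi_min by (simp add: minimal_homeo_def)
  have phinj: "inj_on \<phi> S" using ph unfolding S_def by (simp add: homeomorphic_map_def)
  have phcont: "continuous_map (nsphere d) (nsphere d) \<phi>" using ph homeomorphic_imp_continuous_map by blast
  have phS: "\<And>s. s \<in> S \<Longrightarrow> \<phi> s \<in> S" using phcont unfolding S_def by (metis continuous_map_image_subset_topspace image_subset_iff)
  have hT: "\<And>s x. s \<in> S \<Longrightarrow> x \<in> topspace X \<Longrightarrow> h s x \<in> topspace X"
    using continuous_map_image_subset_topspace[OF h_cont] unfolding X_def S_def by fastforce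
  have Gcont: "continuous_map (prod_topology (nsphere d) X) (prod_topology (nsphere d) X) G"
    using Gh homeomorphic_imp_continuous_map by blast
  have G'cont: "continuous_map (prod_topology (nsphere d) X) (prod_topology (nsphere d) X) G'"
    using Gm by (simp add: homeomorphic_maps_def)
  have GG': "\<And>y. y \<in> S \<times> topspace X \<Longrightarrow> G (G' y) = y"
    using Gm unfolding homeomorphic_maps_def topspace_prod_topology S_def by blast
  have G'G: "\<And>y. y \<in> S \<times> topspace X \<Longrightarrow> G' (G y) = y"
    using Gm unfolding homeomorphic_maps_def topspace_prod_topology S_def by blast
  have G'T: "\<And>y. y \<in> S \<times> topspace X \<Longrightarrow> G' y \<in> S \<times> topspace X"
    using continuous_map_image_subset_topspace[OF G'cont] unfolding S_def by fastforce
  define k where "k = (\<lambda>(s, x). snd (G' (\<phi> s, x)))"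
  have k1: "h s (k (s, x)) = x" if "s \<in> S" "x \<in> topspace X" for s x
  proof -
    obtain s' x' where e: "G' (\<phi> s, x) = (s', x')" by (cases "G' (\<phi> s, x)") auto
    have m: "(s', x') \<in> S \<times> topspace X" using G'T[of "(\<phi> s, x)"] e that phS by auto
    have "G (s', x') = (\<phi> s, x)" using GG'[of "(\<phi> s, x)"] e that phS by auto
    then have "\<phi> s' = \<phi> s" "h s' x' = x" by (auto simp: G_def)
    then have "s' = s" using phinj m that by (auto dest: inj_onD)
    then show ?thesis using e \<open>h s' x' = x\<close> by (simp add: k_def)
  qed
  have k2: "k (s, h s x) = x" if "s \<in> S" "x \<in> topspace X" for s x
    using G'G[of "(s,x)"] that by (simp add: k_def G_def)
  have kcont: "continuous_map (prod_topology (nsphere d) X) X k"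
  proof -
    have "continuous_map (prod_topology (nsphere d) X) (prod_topology (nsphere d) X) (\<lambda>(s, x). (\<phi> s, x))"
      using cm_first[OF phcont] .
    then have "continuous_map (prod_topology (nsphere d) X) (prod_topology (nsphere d) X) (G' \<circ> (\<lambda>(s, x). (\<phi> s, x)))"
      using G'cont continuous_map_compose by blast
    then have "continuous_map (prod_topology (nsphere d) X) X (snd \<circ> (G' \<circ> (\<lambda>(s, x). (\<phi> s, x))))"
      using continuous_map_compose continuous_map_snd by blast
    moreover have "snd \<circ> (G' \<circ> (\<lambda>(s, x). (\<phi> s, x))) = k" by (auto simp: k_def fun_eq_iff)
    ultimately show ?thesis by simp
  qed
  have hc: "continuous_map (prod_topology (nsphere d) X) X (\<lambda>(s, x). h s x)"
    using h_cont by (simp add: X_def)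
  have \<zeta>cont: "continuous_map Z Z \<zeta>" using zh homeomorphic_imp_continuous_map by blast
  have \<zeta>'cont: "continuous_map Z Z \<zeta>'" using zm by (simp add: homeomorphic_maps_def)
  have Fcont: "continuous_map (prod_topology Z X) (prod_topology Z X) F"
  proof -
    have a: "continuous_map (prod_topology Z X) (prod_topology (nsphere d) X) (\<lambda>(z, x). (q z, x))"
      using cm_first[OF q_cont] .
    have "continuous_map (prod_topology Z X) X ((\<lambda>(s, x). h s x) \<circ> (\<lambda>(z, x). (q z, x)))"
      using continuous_map_compose[OF a hc] .
    then have c2: "continuous_map (prod_topology Z X) X (\<lambda>p. h (q (fst p)) (snd p))"
      by (simp add: o_def case_prod_unfold)
    have c1: "continuous_map (prod_topology Z X) Z (\<lambda>p. \<zeta> (fst p))"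
      using continuous_map_compose[OF continuous_map_fst \<zeta>cont] by (simp add: o_def)
    show ?thesis unfolding F_def case_prod_unfold by (rule continuous_map_pairedI[OF c1 c2])
  qed
  define F' where "F' = (\<lambda>(z, x). (\<zeta>' z, k (q (\<zeta>' z), x)))"
  have F'cont: "continuous_map (prod_topology Z X) (prod_topology Z X) F'"
  proof -
    have a: "continuous_map (prod_topology Z X) (prod_topology (nsphere d) X) (\<lambda>(z, x). (q (\<zeta>' z), x))"
    proof -
      have "continuous_map Z (nsphere d) (q \<circ> \<zeta>')" using continuous_map_compose[OF \<zeta>'cont q_cont] .
      from cm_first[OF this, of X] show ?thesis by (simp add: o_def)
    qed
    have "continuous_map (prod_topology Z X) X (k \<circ> (\<lambda>(z, x). (q (\<zeta>' z), x)))"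
      using continuous_map_compose[OF a kcont] .
    then have c2: "continuous_map (prod_topology Z X) X (\<lambda>p. k (q (\<zeta>' (fst p)), snd p))"
      by (simp add: o_def case_prod_unfold)
    have c1: "continuous_map (prod_topology Z X) Z (\<lambda>p. \<zeta>' (fst p))"
      using continuous_map_compose[OF continuous_map_fst \<zeta>'cont] by (simp add: o_def)
    show ?thesis unfolding F'_def case_prod_unfold by (rule continuous_map_pairedI[OF c1 c2])
  qed
  have zz: "\<And>z. z \<in> topspace Z \<Longrightarrow> \<zeta>' (\<zeta> z) = z" "\<And>z. z \<in> topspace Z \<Longrightarrow> \<zeta> (\<zeta>' z) = z"
    using zm by (auto simp: homeomorphic_maps_def)
  have z'T: "\<And>z. z \<in> topspace Z \<Longrightarrow> \<zeta>' z \<in> topspace Z"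
    using \<zeta>'cont by (metis continuous_map_image_subset_topspace image_subset_iff)
  have Fhom: "homeomorphic_map (prod_topology Z X) (prod_topology Z X) F"
    unfolding homeomorphic_map_maps
  proof (intro exI[of _ F'])
    show "homeomorphic_maps (prod_topology Z X) (prod_topology Z X) F F'"
      unfolding homeomorphic_maps_def
      using Fcont F'cont by (auto simp: F_def F'_def zz k1 k2 qS z'T)
  qed
  have closedpi: "closed_map (prod_topology Z X) (prod_topology (nsphere d) X) (\<lambda>(z, x). (q z, id x))"
  proof -
    have "proper_map Z (nsphere d) q"
      by (rule continuous_imp_proper_map[OF Z_compact Hausdorff_imp_kc_space[OF hS] q_cont])
    then have "proper_map (prod_topology Z X) (prod_topology (nsphere d) X) (\<lambda>(z, x). (q z, id x))"
      by (simp add: proper_map_prod proper_map_id[unfolded id_def])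
    then show ?thesis by (rule proper_imp_closed_map)
  qed
  have "\<forall>A. closedin (prod_topology Z X) A \<and> A \<noteq> {} \<and> F ` A = A \<longrightarrow> A = topspace (prod_topology Z X)"
  proof (intro allI impI)
    fix A assume H: "closedin (prod_topology Z X) A \<and> A \<noteq> {} \<and> F ` A = A"
    define \<pi> where "\<pi> = (\<lambda>(z::'z, x::'w \<times> (nat \<Rightarrow> real)). (q z, x))"
    have Asub: "A \<subseteq> topspace Z \<times> topspace X" using H closedin_subset by fastforce
    have cB: "closedin (prod_topology (nsphere d) X) (\<pi> ` A)"
      using closedpi H unfolding closed_map_def \<pi>_def by (simp add: id_def)
    have Bne: "\<pi> ` A \<noteq> {}" using H by auto
    have comm: "G (\<pi> p) = \<pi> (F p)" if "p \<in> topspace Z \<times> topspace X" for p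
      using that q_factor by (auto simp: G_def F_def \<pi>_def)
    have "G ` (\<pi> ` A) = \<pi> ` (F ` A)"
    proof -
      have "G ` (\<pi> ` A) = (G \<circ> \<pi>) ` A" by (simp add: image_comp)
      also have "\<dots> = (\<pi> \<circ> F) ` A" using comm Asub by (intro image_cong) auto
      also have "\<dots> = \<pi> ` (F ` A)" by (simp add: image_comp)
      finally show ?thesis .
    qed
    then have "G ` (\<pi> ` A) = \<pi> ` A" using H by simp
    moreover have "\<forall>B. closedin (prod_topology (nsphere d) X) B \<and> B \<noteq> {} \<and> G ` B = B \<longrightarrow> B = topspace (prod_topology (nsphere d) X)"
      using skew_min unfolding minimal_homeo_def G_def X_def by blast
    ultimately have "\<pi> ` A = topspace (prod_topology (nsphere d) X)"
      using cB Bne by blast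
    then have Ball: "\<pi> ` A = S \<times> topspace X" by (simp add: S_def)
    have Dsub: "\<iota> ` (S - L) \<times> topspace X \<subseteq> A"
    proof clarify
      fix s x assume s: "s \<in> S" "s \<notin> L" and x: "x \<in> topspace X"
      then have "(s, x) \<in> \<pi> ` A" using Ball by auto
      then obtain z where zA: "(z, x) \<in> A" and qz: "q z = s" by (auto simp: \<pi>_def)
      then have zT: "z \<in> topspace Z" using Asub by auto
      then obtain s' where "s' \<in> S - L" "z = \<iota> s'" using q_fibre qz s unfolding S_def by blast
      then have "s' = s" using q_id qz unfolding S_def by auto
      then show "(\<iota> s, x) \<in> A" using zA \<open>z = \<iota> s'\<close> by simp
    qed
    have "prod_topology Z X closure_of (\<iota> ` (S - L) \<times> topspace X) = topspace Z \<times> topspace X"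
      using iota_dense by (simp add: closure_of_Times S_def)
    then have "topspace Z \<times> topspace X \<subseteq> A"
      using closure_of_minimal[OF Dsub] H by (metis closure_of_closedin)
    then show "A = topspace (prod_topology Z X)" using Asub by auto
  qed
  then show ?thesis using Fhom unfolding minimal_homeo_def F_def X_def by simp
qed

end
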